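(* In the construction described in the context, for each $k\in\mathbb{N}$ the map $\pi_k:\mathcal P_\infty\to[0,1]$ (the $k$-th coordinate) is continuous and extends continuously to $P_\infty$. Moreover, for every $\bar x\in P_\infty\setminus i_k(P_k)$ one has $\pi_k(\bar x)\in A_k:=\pi_k(Q_k)$.
   Context: Construction. Let $(e_n)$ be the canonical basis of $\ell^1(\mathbb{N})$; $\alpha(t)=t$ on $[0,\frac12]$, $\alpha(t)=1-t$ on $[\frac12,1]$; $S_n=\{te_1+\alpha(t)e_{n+1}:t\in[0,1]\}$; $x_n=(\frac12-\frac1{2^n})e_1$, $x_\infty=\frac12e_1$; $Y=\bigcup_{n\ge1}(2^{-(n+1)}S_n+x_n)\cup\{x_\infty\}$ with the $\ell^1$ metric $\theta$. $Y$ is the image of an arc-length parametrized injective curve $\gamma:[0,1]\to Y$ with $\gamma(0)=0$, $\gamma(1)=x_\infty$. For $r>0$ let $\theta_r(s,t)=r\,\theta(\gamma(s/r),\gamma(t/r))$ on $[0,r]$. Set $P_1=[0,1]$, $\rho_1=\theta_1$, $L_1=\{1\}$. Given $(P_k,\rho_k)$ with $P_k\subset[0,1]^k$ and $L_k\subset P_k$, let $\pi_k$ denote the $k$-th coordinate, choose a countable dense subset $Q_k=\{q_n:n\in\mathbb{N}\}$ (distinct $q_n$) of $P_k\setminus L_k$ with $\pi_k$ injective on $Q_k$ and $0\notin\pi_k(Q_k)$, set $r_n=2^{-(n+k)}$, $d_n=\theta_{r_n}$, and let $P_{k+1}=\{(x,0):x\in P_k\setminus Q_k\}\cup\{(q_n,y):n\in\mathbb{N},y\in[0,r_n]\}\subset[0,1]^{k+1}$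 with metric $\rho_{k+1}((x_1,y_1),(x_2,y_2))$ equal to $d_n(y_1,y_2)$ if $x_1=x_2=q_n$; $d_n(y_1,0)+\rho_k(x_1,x_2)+d_m(0,y_2)$ if $x_1=q_n,x_2=q_m$, $n\ne m$; $d_n(y_1,0)+\rho_k(x_1,x_2)$ if $x_1=q_n$, $x_2\notin Q_k$ (and symmetrically); $\rho_k(x_1,x_2)$ if $x_1,x_2\notin Q_k$. Let $L_{k+1}=(L_k\times\{0\})\cup\{(q_n,r_n):n\in\mathbb{N}\}$. Let $i_k:P_k\to[0,1]^{\mathbb{N}}$, $i_k(x)=(x_1,\dots,x_k,0,0,\dots)$; $\mathcal P_\infty=\bigcup_k i_k(P_k)$ with the metric $\rho_\infty(x,y)=\rho_k(i_k^{-1}x,i_k^{-1}y)$ for $x,y\in i_k(P_k)$ (well defined since the natural embeddings $P_k\to P_{k'}$ are isometries); $(P_\infty,\rho_\infty)$ is the completion of $(\mathcal P_\infty,\rho_\infty)$, and $i_k$ is regarded as a map into $P_\infty$. On $\mathcal P_\infty\subset[0,1]^{\mathbb{N}}$, $\pi_k$ is the $k$-th coordinate. *)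

theory Defs
  imports "HOL-Analysis.Analysis"
begin

text \<open>The paper's coordinate k (k >= 1) is index k-1; the paper's basis vector
  e_m is the indicator of index m-1. The paper's level k (k >= 1) is index j = k-1, and
  the paper's n (n >= 1) in Q_k = {q_n} is index n-1 here. P_k is stored already embedded
  via i_k (coordinates >= k are zero).\<close>

definition alpha :: "real \<Rightarrow> real" where
  "alpha t = (if t \<le> 1/2 then t else 1 - t)"

text \<open>l^1 distance (used only on finitely supported points).\<close>
definition theta :: "(nat \<Rightarrow> real) \<Rightarrow> (nat \<Rightarrow> real) \<Rightarrow> real" where
  "theta y z = (\<Sum>i. \<bar>y i - z i\<bar>)"

definition Yset :: "(nat \<Rightarrow> real) set" where
  "Yset = (\<Union>n\<in>{1..}. {(\<lambda>i. if i = 0 then (1/2)^(n+1) * t + (1/2 - (1/2)^n)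
                          else if i = n then (1/2)^(n+1) * alpha t else 0) | t. 0 \<le> t \<and> t \<le> 1})
          \<union> {(\<lambda>i. if i = 0 then 1/2 else 0)}"

text \<open>The arc-length parametrization gamma of Y, written out explicitly: for
  s in [1 - 2^-(n-1), 1 - 2^-n) with u = s - (1 - 2^-(n-1)), gamma traverses the n-th
  piece 2^-(n+1) S_n + x_n at parameter t = 2^n u.\<close>
definition gamma :: "real \<Rightarrow> (nat \<Rightarrow> real)" where
  "gamma s = (if s \<ge> 1 then (\<lambda>i. if i = 0 then 1/2 else 0)
     else (let n = nat \<lfloor>- log 2 (1 - s)\<rfloor> + 1;
               u = s - (1 - (1/2)^(n-1))
           in (\<lambda>i. if i = 0 then (1/2 - (1/2)^n) + u / 2
                   else if i = n then (1/2)^(n+1) * alpha (2^n * u) else 0)))"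

definition theta_r :: "real \<Rightarrow> real \<Rightarrow> real \<Rightarrow> real" where
  "theta_r r s t = r * theta (gamma (s / r)) (gamma (t / r))"

text \<open>r_n = 2^-(n+k) with paper n = n+1, paper k = j+1.\<close>
definition rr :: "nat \<Rightarrow> nat \<Rightarrow> real" where
  "rr j n = (1/2) ^ (n + j + 2)"

definition dd :: "nat \<Rightarrow> nat \<Rightarrow> real \<Rightarrow> real \<Rightarrow> real" where
  "dd j n = theta_r (rr j n)"

text \<open>q j n is the paper's q_{n+1} in Q_{j+1} (embedded point).\<close>
definition idx :: "(nat \<Rightarrow> nat \<Rightarrow> (nat \<Rightarrow> real)) \<Rightarrow> nat \<Rightarrow> (nat \<Rightarrow> real) \<Rightarrow> nat" where
  "idx q j x = (THE n. q j n = x)"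

primrec Pk :: "(nat \<Rightarrow> nat \<Rightarrow> (nat \<Rightarrow> real)) \<Rightarrow> nat \<Rightarrow> (nat \<Rightarrow> real) set" where
  "Pk q 0 = {p. 0 \<le> p 0 \<and> p 0 \<le> 1 \<and> (\<forall>i>0. p i = 0)}"
| "Pk q (Suc j) = {p. p \<in> Pk q j \<and> p \<notin> range (q j)}
      \<union> {(q j n)(Suc j := y) | n y. 0 \<le> y \<and> y \<le> rr j n}"

primrec Lk :: "(nat \<Rightarrow> nat \<Rightarrow> (nat \<Rightarrow> real)) \<Rightarrow> nat \<Rightarrow> (nat \<Rightarrow> real) set" where
  "Lk q 0 = {(\<lambda>i. if i = 0 then 1 else 0)}"
| "Lk q (Suc j) = Lk q j \<union> {(q j n)(Suc j := rr j n) | n. True}"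

primrec rho :: "(nat \<Rightarrow> nat \<Rightarrow> (nat \<Rightarrow> real)) \<Rightarrow> nat \<Rightarrow> (nat \<Rightarrow> real) \<Rightarrow> (nat \<Rightarrow> real) \<Rightarrow> real" where
  "rho q 0 a b = theta_r 1 (a 0) (b 0)"
| "rho q (Suc j) a b =
     (let xa = a(Suc j := 0); ya = a (Suc j); xb = b(Suc j := 0); yb = b (Suc j);
          Q = range (q j) in
      if xa \<in> Q \<and> xb \<in> Q then
        (if xa = xb then dd j (idx q j xa) ya yb
         else dd j (idx q j xa) ya 0 + rho q j xa xb + dd j (idx q j xb) 0 yb)
      else if xa \<in> Q then dd j (idx q j xa) ya 0 + rho q j xa xb
      else if xb \<in> Q then rho q j xa xb + dd j (idx q j xb) 0 yb
      else rho q j xa xb)"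

definition valid_choice :: "(nat \<Rightarrow> nat \<Rightarrow> (nat \<Rightarrow> real)) \<Rightarrow> bool" where
  "valid_choice q \<longleftrightarrow> (\<forall>j.
     range (q j) \<subseteq> Pk q j - Lk q j \<and>
     inj (q j) \<and>
     (\<forall>x \<in> Pk q j - Lk q j. \<forall>e>0. \<exists>n. rho q j x (q j n) < e) \<and>
     inj_on (\<lambda>x. x j) (range (q j)) \<and>
     (\<forall>n. q j n j \<noteq> 0))"

definition Pinf :: "(nat \<Rightarrow> nat \<Rightarrow> (nat \<Rightarrow> real)) \<Rightarrow> (nat \<Rightarrow> real) set" where
  "Pinf q = (\<Union>j. Pk q j)"

definition rhoinf :: "(nat \<Rightarrow> nat \<Rightarrow> (nat \<Rightarrow> real)) \<Rightarrow> (nat \<Rightarrow> real) \<Rightarrow> (nat \<Rightarrow> real) \<Rightarrow> real" where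
  "rhoinf q x y = rho q (LEAST j. x \<in> Pk q j \<and> y \<in> Pk q j) x y"

end

theory Submission
  imports Defs
begin



definition gn :: "real \<Rightarrow> nat" where "gn s = nat \<lfloor>- log 2 (1 - s)\<rfloor> + 1"

lemma gn_ge1: "gn s \<ge> 1" by (simp add: gn_def)

lemma gamma_lt1: "s < 1 \<Longrightarrow> gamma s = (\<lambda>i. if i = 0 then (1/2 - (1/2)^gn s) + (s - (1 - (1/2)^(gn s - 1))) / 2
                   else if i = gn s then (1/2)^(gn s+1) * alpha (2^gn s * (s - (1 - (1/2)^(gn s - 1)))) else 0)"
  unfolding gamma_def gn_def Let_def by simp

lemma gamma_ge1: "s \<ge> 1 \<Longrightarrow> gamma s = (\<lambda>i. if i = 0 then 1/2 else 0)"
  by (simp add: gamma_def)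

lemma half_pow_pred: "n \<ge> 1 \<Longrightarrow> ((1::real)/2)^(n-1) = 2 * (1/2)^n"
  by (cases n) auto

lemma gamma_0: "s \<le> 1 \<Longrightarrow> gamma s 0 = s/2"
proof (cases "s < 1")
  case True
  have "((1::real)/2)^(gn s - 1) = 2 * (1/2)^gn s" using gn_ge1 half_pow_pred by blast
  then show ?thesis using True by (simp add: gamma_lt1 field_simps)
qed (simp add: gamma_ge1)

lemma gamma_supp: "i \<noteq> 0 \<Longrightarrow> i \<noteq> gn s \<Longrightarrow> gamma s i = 0"
  by (cases "s < 1") (auto simp: gamma_lt1 gamma_ge1)

lemma gn_mono: "s \<le> t \<Longrightarrow> t < 1 \<Longrightarrow> gn s \<le> gn t"
proof -
  assume a: "s \<le> t" "t < 1"
  have "log 2 (1 - t) \<le> log 2 (1 - s)" using a by simp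
  then have "\<lfloor>- log 2 (1 - s)\<rfloor> \<le> \<lfloor>- log 2 (1 - t)\<rfloor>" by (intro floor_mono) simp
  then show ?thesis unfolding gn_def by simp
qed

lemma gn_piece: assumes "0 \<le> s" "s < 1"
  shows "1 - (1/2)^(gn s - 1) \<le> s" "s < 1 - (1/2)^(gn s)"
proof -
  define L where "L = - log 2 (1 - s)"
  have L0: "L \<ge> 0" using assms by (simp add: L_def)
  define k where "k = \<lfloor>L\<rfloor>"
  have k0: "k \<ge> 0" using L0 by (simp add: k_def)
  have g: "gn s - 1 = nat k" "gn s = nat k + 1" by (simp_all add: gn_def L_def k_def)
  have e: "1 - s = 2 powr (- L)" using assms by (simp add: L_def)
  have kk: "real_of_int k = real (nat k)" using k0 by simp
  have p1: "((1::real)/2)^(nat k) = 2 powr (- real_of_int k)"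
    unfolding kk by (simp add: powr_minus_divide powr_realpow power_one_over)
  have p2: "((1::real)/2)^(nat k + 1) = 2 powr (- (real_of_int k + 1))"
  proof -
    have "(2::real) powr (- (real_of_int k + 1)) = 2 powr (- real_of_int k) * 2 powr (-1)"
      by (subst powr_add[symmetric]) simp
    then show ?thesis using p1 by (simp add: powr_minus)
  qed
  have "k \<le> L" "L < k + 1" unfolding k_def by linarith+
  then have m1: "(2::real) powr (- L) \<le> 2 powr (- real_of_int k)" and m2: "(2::real) powr (- (real_of_int k + 1)) < 2 powr (- L)"
    by (simp_all only: powr_le_cancel_iff powr_less_cancel_iff)
  show "1 - (1/2)^(gn s - 1) \<le> s" unfolding g(1) p1 using m1 e by linarith
  show "s < 1 - (1/2)^(gn s)" unfolding g(2) p2 using m2 e by linarith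
qed

lemma alpha_lip: "\<bar>alpha a - alpha b\<bar> \<le> \<bar>a - b\<bar>"
  by (simp add: alpha_def abs_if) 

lemma alpha_bnd: "0 \<le> v \<Longrightarrow> v \<le> 1 \<Longrightarrow> 0 \<le> alpha v \<and> alpha v \<le> v \<and> alpha v \<le> 1 - v"
  by (simp add: alpha_def)

definition cc :: "real \<Rightarrow> real" where "cc s = gamma s (gn s)"

lemma cc_eq: "s < 1 \<Longrightarrow> cc s = (1/2)^(gn s+1) * alpha (2^gn s * (s - (1 - (1/2)^(gn s - 1))))"
  using gn_ge1[of s] by (simp add: cc_def gamma_lt1)

lemma pow_facts: "((1::real)/2)^(n+1) = (1/2)^n / 2" "(2::real)^n * (1/2)^n = 1" 
  by (simp_all add: power_one_over)

lemma cc_bnd: assumes "0 \<le> s" "s < 1"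
  shows "0 \<le> cc s" "cc s \<le> (s - (1 - (1/2)^(gn s - 1)))/2" "cc s \<le> (1 - (1/2)^gn s - s)/2"
proof -
  define n where "n = gn s"
  define X :: real where "X = (1/2)^n"
  define u where "u = s - (1 - (1/2)^(n-1))"
  have n1: "n \<ge> 1" using gn_ge1 n_def by simp
  have X0: "X > 0" by (simp add: X_def)
  have a2: "((1::real)/2)^(n-1) = 2 * X" using n1 half_pow_pred X_def by simp
  have u0: "0 \<le> u" "u < X" using gn_piece[OF assms] a2 by (simp_all add: u_def X_def n_def)
  have pn: "(2::real)^n * X = 1" by (simp add: X_def pow_facts)
  have h: "((1::real)/2)^(n+1) = X / 2" by (simp add: X_def pow_facts)
  define v where "v = 2^n * u"
  have v: "0 \<le> v" "v \<le> 1"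
  proof -
    show "0 \<le> v" using u0 by (simp add: v_def)
    have "2^n * u \<le> 2^n * X" using u0 by (intro mult_left_mono) simp_all
    then show "v \<le> 1" using pn by (simp add: v_def)
  qed
  have ccv: "cc s = X / 2 * alpha v" unfolding cc_eq[OF assms(2)] n_def[symmetric] h u_def[symmetric] v_def[symmetric] ..
  have Xv: "X * v = u" using pn by (simp add: v_def algebra_simps)
  have ab: "0 \<le> alpha v" "alpha v \<le> v" "alpha v \<le> 1 - v" using alpha_bnd[OF v] by auto
  show "0 \<le> cc s" unfolding ccv using ab X0 by simp
  have "X / 2 * alpha v \<le> X / 2 * v" using ab X0 by (intro mult_left_mono) auto
  then show "cc s \<le> (s - (1 - (1/2)^(gn s - 1)))/2" using ccv Xv by (simp add: u_def n_def)
  have "X / 2 * alpha v \<le> X / 2 * (1 - v)" using ab X0 by (intro mult_left_mono) auto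
  moreover note a2
  ultimately show "cc s \<le> (1 - (1/2)^gn s - s)/2" using ccv Xv 
    by (simp add: u_def n_def[symmetric] X_def[symmetric] algebra_simps)
qed

lemma cc_lip: assumes "s < 1" "t < 1" "gn s = gn t"
  shows "\<bar>cc s - cc t\<bar> \<le> \<bar>s - t\<bar> / 2"
proof -
  define n where "n = gn s"
  define X :: real where "X = (1/2)^n"
  have pn: "(2::real)^n * X = 1" by (simp add: X_def pow_facts)
  have h: "((1::real)/2)^(n+1) = X / 2" by (simp add: X_def pow_facts)
  have X0: "X > 0" by (simp add: X_def)
  define a where "a = 2^n * (s - (1 - (1/2)^(n-1)))"
  define b where "b = 2^n * (t - (1 - (1/2)^(n-1)))"
  have cs: "cc s = X / 2 * alpha a" unfolding cc_eq[OF assms(1)] a_def h[symmetric] n_def ..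
  have ct: "cc t = X / 2 * alpha b" unfolding cc_eq[OF assms(2)] b_def h[symmetric] n_def assms(3) ..
  have d: "cc s - cc t = X / 2 * (alpha a - alpha b)" unfolding cs ct by (simp add: algebra_simps)
  have "\<bar>cc s - cc t\<bar> = \<bar>X / 2\<bar> * \<bar>alpha a - alpha b\<bar>" unfolding d by (rule abs_mult)
  then have "\<bar>cc s - cc t\<bar> = X / 2 * \<bar>alpha a - alpha b\<bar>" using X0 by simp
  also have "\<dots> \<le> X / 2 * \<bar>a - b\<bar>" using X0 alpha_lip by (intro mult_left_mono) auto
  also have "a - b = 2^n * (s - t)" by (simp add: a_def b_def algebra_simps)
  also have "X / 2 * \<bar>2^n * (s - t)\<bar> = \<bar>s - t\<bar> / 2" using pn by (simp add: abs_mult mult.commute)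
  finally show ?thesis .
qed

lemma theta_fin: "finite S \<Longrightarrow> (\<And>i. i \<notin> S \<Longrightarrow> y i = z i) \<Longrightarrow> theta y z = (\<Sum>i\<in>S. \<bar>y i - z i\<bar>)"
  unfolding theta_def by (rule suminf_finite) auto

lemma theta_sym: "theta y z = theta z y"
  unfolding theta_def by (simp add: abs_minus_commute)

lemma theta_refl: "theta y y = 0"
  unfolding theta_def by simp

lemma theta_gamma: "theta (gamma s) (gamma t) = (\<Sum>i\<in>{0, gn s, gn t}. \<bar>gamma s i - gamma t i\<bar>)"
  by (rule theta_fin) (auto simp: gamma_supp)

lemma theta_gamma_nonneg: "0 \<le> theta (gamma s) (gamma t)"
  unfolding theta_gamma by (rule sum_nonneg) simp

lemma theta_gamma_lower: "s \<le> 1 \<Longrightarrow> t \<le> 1 \<Longrightarrow> \<bar>s - t\<bar> / 2 \<le> theta (gamma s) (gamma t)"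
proof -
  assume a: "s \<le> 1" "t \<le> 1"
  have "\<bar>gamma s 0 - gamma t 0\<bar> \<le> (\<Sum>i\<in>{0, gn s, gn t}. \<bar>gamma s i - gamma t i\<bar>)"
    by (rule member_le_sum) auto
  then show ?thesis using a by (simp add: theta_gamma gamma_0)
qed

lemma sum3_le: "(\<And>i. 0 \<le> f i) \<Longrightarrow> sum f {a, b, c} \<le> f a + f b + (f c :: real)"
  by (simp add: sum.insert_if)

lemma theta_gamma_upper_aux: assumes "0 \<le> s" "s < t" "t \<le> 1"
  shows "theta (gamma s) (gamma t) \<le> 2 * \<bar>s - t\<bar>"
proof -
  define F where "F i = \<bar>gamma s i - gamma t i\<bar>" for i
  have th: "theta (gamma s) (gamma t) \<le> F 0 + F (gn s) + F (gn t)"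
    unfolding theta_gamma F_def by (rule sum3_le) simp
  have F0: "2 * F 0 = t - s" using assms by (simp add: F_def gamma_0)
  have s1: "s < 1" using assms by simp
  have ab: "\<bar>s - t\<bar> = t - s" using assms by simp
  have gs0: "gn s \<noteq> 0" "gn t \<noteq> 0" using gn_ge1 by (metis not_one_le_zero)+
  define As :: real where "As = (1/2)^(gn s - 1)"
  define Xs :: real where "Xs = (1/2)^(gn s)"
  define At :: real where "At = (1/2)^(gn t - 1)"
  define Xt :: real where "Xt = (1/2)^(gn t)"
  have Xs0: "Xs \<ge> 0" by (simp add: Xs_def)
  have ccs: "0 \<le> cc s" "2 * cc s \<le> s - (1 - As)" "2 * cc s \<le> 1 - Xs - s"
    using cc_bnd[OF assms(1) s1] unfolding As_def Xs_def by auto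
  show ?thesis
  proof (cases "t = 1")
    case True
    have gt: "gamma t i = 0" if "i \<noteq> 0" for i using True that by (simp add: gamma_ge1)
    have "F (gn s) = cc s" using gt gs0 ccs by (simp add: F_def cc_def)
    moreover have "F (gn t) \<le> cc s" using gt gs0 ccs gamma_supp[of "gn t" s]
      by (cases "gn t = gn s") (auto simp: F_def cc_def)
    ultimately have "F 0 + F (gn s) + F (gn t) \<le> 2 * (t - s)" using F0 ccs Xs0 True assms by (smt (verit))
    then show ?thesis using th ab by (smt (verit))
  next
    case False
    then have t1: "t < 1" using assms by simp
    have cct: "0 \<le> cc t" "2 * cc t \<le> t - (1 - At)" "2 * cc t \<le> 1 - Xt - t"
      using cc_bnd[of t] assms t1 unfolding At_def Xt_def by auto
    show ?thesis
    proof (cases "gn s = gn t")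
      case True
      have "2 * F (gn s) \<le> t - s" "2 * F (gn t) \<le> t - s"
        using cc_lip[OF s1 t1 True] True assms by (simp_all add: F_def cc_def abs_minus_commute)
      then show ?thesis using th F0 assms ab by (smt (verit))
    next
      case False
      have lt: "gn s < gn t" using gn_mono[of s t] assms t1 False by simp
      have "F (gn s) = cc s" using gs0 ccs False gamma_supp[of "gn s" t] by (simp add: F_def cc_def)
      moreover have "F (gn t) = cc t" using gs0 cct False gamma_supp[of "gn t" s] by (simp add: F_def cc_def)
      moreover have "At \<le> Xs" unfolding At_def Xs_def
        by (rule power_decreasing) (use lt in auto)
      moreover have "1 - At \<le> t" "s < 1 - Xs"
        using gn_piece[of t] gn_piece[of s] assms t1 unfolding At_def Xs_def by auto
      ultimately show ?thesis using th F0 ccs cct assms ab by (smt (verit))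
    qed
  qed
qed

lemma theta_gamma_upper: assumes "0 \<le> s" "s \<le> 1" "0 \<le> t" "t \<le> 1"
  shows "theta (gamma s) (gamma t) \<le> 2 * \<bar>s - t\<bar>"
proof -
  consider "s = t" | "s < t" | "t < s" by linarith
  then show ?thesis
  proof cases
    case 1 then show ?thesis by (simp add: theta_refl)
  next
    case 2 then show ?thesis using theta_gamma_upper_aux assms by simp
  next
    case 3 then show ?thesis using theta_gamma_upper_aux[of t s] assms by (simp add: theta_sym abs_minus_commute)
  qed
qed

lemma theta_r_lower: "0 < r \<Longrightarrow> 0 \<le> s \<Longrightarrow> s \<le> r \<Longrightarrow> 0 \<le> t \<Longrightarrow> t \<le> r \<Longrightarrow> \<bar>s - t\<bar> / 2 \<le> theta_r r s t"
proof -
  assume a: "0 < r" "0 \<le> s" "s \<le> r" "0 \<le> t" "t \<le> r"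
  have "\<bar>s/r - t/r\<bar> / 2 \<le> theta (gamma (s/r)) (gamma (t/r))"
    using a by (intro theta_gamma_lower) simp_all
  then have "r * (\<bar>s/r - t/r\<bar> / 2) \<le> r * theta (gamma (s/r)) (gamma (t/r))"
    using a by (intro mult_left_mono) auto
  moreover have "r * (\<bar>s/r - t/r\<bar> / 2) = \<bar>s - t\<bar> / 2"
    using a by (simp add: diff_divide_distrib[symmetric] abs_divide)
  ultimately show ?thesis by (simp add: theta_r_def)
qed

lemma theta_r_upper: "0 < r \<Longrightarrow> 0 \<le> s \<Longrightarrow> s \<le> r \<Longrightarrow> 0 \<le> t \<Longrightarrow> t \<le> r \<Longrightarrow> theta_r r s t \<le> 2 * \<bar>s - t\<bar>"
proof -
  assume a: "0 < r" "0 \<le> s" "s \<le> r" "0 \<le> t" "t \<le> r"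
  have "theta (gamma (s/r)) (gamma (t/r)) \<le> 2 * \<bar>s/r - t/r\<bar>"
    using a by (intro theta_gamma_upper) simp_all
  then have "r * theta (gamma (s/r)) (gamma (t/r)) \<le> r * (2 * \<bar>s/r - t/r\<bar>)"
    using a by (intro mult_left_mono) auto
  moreover have "r * (2 * \<bar>s/r - t/r\<bar>) = 2 * \<bar>s - t\<bar>"
    using a by (simp add: diff_divide_distrib[symmetric] abs_divide)
  ultimately show ?thesis by (simp add: theta_r_def)
qed

lemma theta_r_nonneg: "0 \<le> r \<Longrightarrow> 0 \<le> theta_r r s t"
  by (simp add: theta_r_def theta_gamma_nonneg)

lemma theta_r_refl: "theta_r r s s = 0"
  by (simp add: theta_r_def theta_refl)

lemma theta_r_sym: "theta_r r s t = theta_r r t s"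
  by (simp add: theta_r_def theta_sym)




lemma vc_range: "valid_choice q \<Longrightarrow> q j n \<in> Pk q j"
  unfolding valid_choice_def by blast
lemma vc_inj: "valid_choice q \<Longrightarrow> inj (q j)"
  unfolding valid_choice_def by blast
lemma vc_nz: "valid_choice q \<Longrightarrow> q j n j \<noteq> 0"
  unfolding valid_choice_def by blast

lemma rr_pos: "rr j n > 0" by (simp add: rr_def)

lemma dd_nonneg: "0 \<le> dd j n y y'"
  unfolding dd_def by (rule theta_r_nonneg) (simp add: less_imp_le rr_pos)
lemma dd_refl: "dd j n y y = 0" unfolding dd_def by (rule theta_r_refl)
lemma dd_sym: "dd j n y y' = dd j n y' y" unfolding dd_def by (rule theta_r_sym)
lemma dd_lower: "0 \<le> y \<Longrightarrow> y \<le> rr j n \<Longrightarrow> 0 \<le> y' \<Longrightarrow> y' \<le> rr j n \<Longrightarrow> \<bar>y - y'\<bar> / 2 \<le> dd j n y y'"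
  unfolding dd_def by (rule theta_r_lower) (simp_all add: rr_pos)
lemma dd_upper: "0 \<le> y \<Longrightarrow> y \<le> rr j n \<Longrightarrow> 0 \<le> y' \<Longrightarrow> y' \<le> rr j n \<Longrightarrow> dd j n y y' \<le> 2 * \<bar>y - y'\<bar>"
  unfolding dd_def by (rule theta_r_upper) (simp_all add: rr_pos)

lemma rho_nonneg: "0 \<le> rho q i a b"
proof (induction i arbitrary: a b)
  case 0 then show ?case by (simp add: theta_r_nonneg)
next
  case (Suc i) then show ?case by (simp add: Let_def dd_nonneg add_nonneg_nonneg)
qed

lemma rho_refl: "rho q i a a = 0"
proof (induction i arbitrary: a)
  case 0 then show ?case by (simp add: theta_r_refl)
next
  case (Suc i) then show ?case by (simp add: Let_def dd_refl)
qed

lemma rho_sym: "rho q i a b = rho q i b a"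
proof (induction i arbitrary: a b)
  case 0 then show ?case by (simp add: theta_r_sym)
next
  case (Suc i)
  define xa where "xa = a(Suc i := 0)"
  define xb where "xb = b(Suc i := 0)"
  have e: "rho q i xa xb = rho q i xb xa" by (rule Suc.IH)
  show ?case unfolding rho.simps Let_def xa_def[symmetric] xb_def[symmetric]
    using e by (cases "xa \<in> range (q i)"; cases "xb \<in> range (q i)"; cases "xa = xb") (simp_all add: dd_sym)
qed

lemma P1: "valid_choice q \<Longrightarrow> p \<in> Pk q i \<Longrightarrow> i < k \<Longrightarrow> p k = 0"
proof (induction i arbitrary: p k)
  case 0 then show ?case by simp
next
  case (Suc i)
  from Suc.prems(2) consider "p \<in> Pk q i" | n y where "p = (q i n)(Suc i := y)" by auto
  then show ?case
  proof cases
    case 1 then show ?thesis using Suc by simp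
  next
    case 2 then show ?thesis using Suc.IH[OF Suc.prems(1) vc_range[OF Suc.prems(1)]] Suc.prems(3) by simp
  qed
qed

lemma q_Suc0: "valid_choice q \<Longrightarrow> (q i n)(Suc i := 0) = q i n"
  using P1[OF _ vc_range, of q i "Suc i" n] by (simp add: fun_upd_idem)

lemma P2: "valid_choice q \<Longrightarrow> Pk q i \<subseteq> Pk q (Suc i)"
proof
  fix p assume vc: "valid_choice q" and p: "p \<in> Pk q i"
  show "p \<in> Pk q (Suc i)"
  proof (cases "p \<in> range (q i)")
    case True
    then obtain n where "p = q i n" by auto
    then have "p = (q i n)(Suc i := 0)" using q_Suc0[OF vc] by simp
    then have "\<exists>n' y. p = (q i n')(Suc i := y) \<and> 0 \<le> y \<and> y \<le> rr i n'"
      using rr_pos[of i n] by (intro exI[of _ n] exI[of _ "0::real"]) auto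
    then show ?thesis by simp
  qed (use p in simp)
qed

lemma Pk_mono: assumes "valid_choice q" "i \<le> m" shows "Pk q i \<subseteq> Pk q m"
  using assms(2) by (induction m rule: dec_induct) (use P2[OF assms(1)] in blast)+

lemma idx_q: "valid_choice q \<Longrightarrow> idx q j (q j n) = n"
  unfolding idx_def using vc_inj[of q j] by (auto intro!: the_equality dest: injD)

lemma P3: assumes vc: "valid_choice q" and p: "p \<in> Pk q (Suc i)"
  shows "(p(Suc i := 0) \<notin> range (q i) \<and> p \<in> Pk q i \<and> p (Suc i) = 0 \<and> p(Suc i := 0) = p)
    \<or> (\<exists>n. p(Suc i := 0) = q i n \<and> 0 \<le> p (Suc i) \<and> p (Suc i) \<le> rr i n)"
proof -
  from p consider "p \<in> Pk q i" "p \<notin> range (q i)" | n y where "p = (q i n)(Suc i := y)" "0 \<le> y" "y \<le> rr i n" by auto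
  then show ?thesis
  proof cases
    case 1
    have "p (Suc i) = 0" using P1[OF vc 1(1)] by simp
    then show ?thesis using 1 by (simp add: fun_upd_idem)
  next
    case 2
    then show ?thesis using q_Suc0[OF vc, of i n] by auto
  qed
qed

lemma P3_mem: assumes vc: "valid_choice q" and p: "p \<in> Pk q (Suc i)"
  shows "p(Suc i := 0) \<in> Pk q i"
  using P3[OF vc p] vc_range[OF vc] by auto

definition HH :: "(nat \<Rightarrow> nat \<Rightarrow> (nat \<Rightarrow> real)) \<Rightarrow> nat \<Rightarrow> (nat \<Rightarrow> real) \<Rightarrow> real" where
  "HH q m a = (if a(Suc m := 0) \<in> range (q m) then dd m (idx q m (a(Suc m := 0))) (a (Suc m)) 0 else 0)"

lemma HH_nonneg: "0 \<le> HH q m a" by (simp add: HH_def dd_nonneg)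

lemma rho_split: "a(Suc m := 0) \<noteq> b(Suc m := 0) \<Longrightarrow>
   rho q (Suc m) a b = HH q m a + rho q m (a(Suc m := 0)) (b(Suc m := 0)) + HH q m b"
  by (auto simp: Let_def HH_def dd_sym)

lemma rho_to_base: "t (Suc m) = 0 \<Longrightarrow> rho q (Suc m) a t = HH q m a + rho q m (a(Suc m := 0)) t"
proof -
  assume t: "t (Suc m) = 0"
  then have t': "t(Suc m := 0) = t" by (simp add: fun_upd_idem)
  show ?thesis
  proof (cases "a(Suc m := 0) = t")
    case True
    then show ?thesis using t t' by (auto simp: Let_def HH_def rho_refl)
  next
    case False
    then show ?thesis using rho_split[of a m t q] t t' by (simp add: HH_def dd_refl)
  qed
qed

lemma rho_ge_base: "rho q m (a(Suc m := 0)) (b(Suc m := 0)) \<le> rho q (Suc m) a b"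
proof (cases "a(Suc m := 0) = b(Suc m := 0)")
  case True then show ?thesis using rho_nonneg[of q "Suc m" a b] by (simp add: rho_refl)
next
  case False then show ?thesis using rho_split[OF False, of q] HH_nonneg[of q m a] HH_nonneg[of q m b] by simp
qed

lemma HH_bnd': assumes vc: "valid_choice q" and a: "a \<in> Pk q (Suc m)"
  shows "0 \<le> a (Suc m) \<and> a (Suc m) \<le> 2 * HH q m a \<and> HH q m a \<le> 2 * a (Suc m)"
proof -
  from P3[OF vc a] consider "a(Suc m := 0) \<notin> range (q m)" "a (Suc m) = 0"
    | n where "a(Suc m := 0) = q m n" "0 \<le> a (Suc m)" "a (Suc m) \<le> rr m n" by blast
  then show ?thesis
  proof cases
    case 1 then show ?thesis by (auto simp: HH_def)
  next
    case 2
    have h: "HH q m a = dd m n (a (Suc m)) 0" using 2 by (simp add: HH_def idx_q[OF vc])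
    have "\<bar>a (Suc m) - 0\<bar> / 2 \<le> dd m n (a (Suc m)) 0" using 2 rr_pos[of m n] by (intro dd_lower) auto
    moreover have "dd m n (a (Suc m)) 0 \<le> 2 * \<bar>a (Suc m) - 0\<bar>" using 2 rr_pos[of m n] by (intro dd_upper) auto
    ultimately show ?thesis using 2 h by auto
  qed
qed

lemmas HH_bnd = HH_bnd'[THEN conjunct1] HH_bnd'[THEN conjunct2, THEN conjunct1] HH_bnd'[THEN conjunct2, THEN conjunct2]

lemma rho_consist: assumes vc: "valid_choice q" and a: "a \<in> Pk q i" and b: "b \<in> Pk q i"
  shows "rho q (Suc i) a b = rho q i a b"
proof -
  have a0: "a(Suc i := 0) = a" "a (Suc i) = 0" using P1[OF vc a, of "Suc i"] by (simp_all add: fun_upd_idem)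
  have b0: "b(Suc i := 0) = b" "b (Suc i) = 0" using P1[OF vc b, of "Suc i"] by (simp_all add: fun_upd_idem)
  show ?thesis
  proof (cases "a = b")
    case True then show ?thesis by (simp add: rho_refl)
  next
    case False
    then show ?thesis using rho_split[of a i b q] a0 b0 by (simp add: HH_def dd_refl)
  qed
qed

lemma rho_consist_le: assumes vc: "valid_choice q" and "i \<le> m" and a: "a \<in> Pk q i" and b: "b \<in> Pk q i"
  shows "rho q m a b = rho q i a b"
  using assms(2)
proof (induction m rule: dec_induct)
  case base then show ?case by simp
next
  case (step n)
  have "a \<in> Pk q n" "b \<in> Pk q n" using Pk_mono[OF vc step.hyps(1)] a b by auto
  then show ?case using rho_consist[OF vc] step by simp
qed

lemma rhoinf_eq: assumes vc: "valid_choice q" and a: "a \<in> Pk q i" and b: "b \<in> Pk q i"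
  shows "rhoinf q a b = rho q i a b"
proof -
  define m where "m = (LEAST m. a \<in> Pk q m \<and> b \<in> Pk q m)"
  have m: "a \<in> Pk q m \<and> b \<in> Pk q m" unfolding m_def by (rule LeastI[of _ i]) (use a b in simp)
  have "m \<le> i" unfolding m_def by (rule Least_le) (use a b in simp)
  then have "rho q i a b = rho q m a b" using rho_consist_le[OF vc, of m i a b] m by simp
  then show ?thesis by (simp add: rhoinf_def m_def)
qed




lemma R3: assumes vc: "valid_choice q" and a: "a \<in> Pk q i" and b: "b \<in> Pk q i"
  shows "\<bar>a i - b i\<bar> \<le> 2 * rho q i a b"
proof (cases i)
  case 0
  have "\<bar>a 0 - b 0\<bar> / 2 \<le> theta_r 1 (a 0) (b 0)" using a b 0 by (intro theta_r_lower) auto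
  then show ?thesis using 0 by simp
next
  case (Suc m)
  have a': "a \<in> Pk q (Suc m)" and b': "b \<in> Pk q (Suc m)" using a b Suc by auto
  note ha = HH_bnd[OF vc a'] and hb = HH_bnd[OF vc b']
  show ?thesis
  proof (cases "a(Suc m := 0) = b(Suc m := 0)")
    case False
    have "rho q (Suc m) a b = HH q m a + rho q m (a(Suc m := 0)) (b(Suc m := 0)) + HH q m b"
      by (rule rho_split[OF False])
    moreover have "0 \<le> rho q m (a(Suc m := 0)) (b(Suc m := 0))" by (rule rho_nonneg)
    ultimately have "a (Suc m) + b (Suc m) \<le> 2 * rho q (Suc m) a b" using ha hb by linarith
    then show ?thesis using Suc ha hb by (simp add: abs_le_iff) 
  next
    case True
    from P3[OF vc a'] consider "a(Suc m := 0) \<notin> range (q m)" "a (Suc m) = 0"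
      | n where "a(Suc m := 0) = q m n" "0 \<le> a (Suc m)" "a (Suc m) \<le> rr m n" by blast
    then show ?thesis
    proof cases
      case 1
      then have "b (Suc m) = 0" using P3[OF vc b'] True by auto
      then show ?thesis using 1 Suc rho_nonneg[of q i a b] by simp
    next
      case 2
      have bb: "0 \<le> b (Suc m)" "b (Suc m) \<le> rr m n"
        using P3[OF vc b'] True 2 vc_inj[OF vc, of m] by (auto dest: injD)
      have xa: "a(Suc m := 0) = q m n" using 2 by simp
      have xb: "b(Suc m := 0) = q m n" using 2 True by simp
      have "rho q (Suc m) a b = dd m n (a (Suc m)) (b (Suc m))"
        unfolding rho.simps Let_def xa xb by (simp add: idx_q[OF vc])
      moreover have "\<bar>a (Suc m) - b (Suc m)\<bar> / 2 \<le> dd m n (a (Suc m)) (b (Suc m))"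
        using 2 bb by (intro dd_lower) auto
      ultimately show ?thesis using Suc by simp
    qed
  qed
qed

definition trunc :: "nat \<Rightarrow> (nat \<Rightarrow> real) \<Rightarrow> (nat \<Rightarrow> real)" where
  "trunc i x = (\<lambda>k. if k \<le> i then x k else 0)"

lemma tr_id: "valid_choice q \<Longrightarrow> x \<in> Pk q i \<Longrightarrow> trunc i x = x"
  unfolding trunc_def using P1[of q x i] by (auto simp: fun_eq_iff)

lemma tr_Suc: "i \<le> m \<Longrightarrow> trunc i (x(Suc m := 0)) = trunc i x"
  unfolding trunc_def by (auto simp: fun_eq_iff)

lemma tr_mem: assumes vc: "valid_choice q" and "i \<le> m" and x: "x \<in> Pk q m"
  shows "trunc i x \<in> Pk q i"
  using assms(2) x
proof (induction m arbitrary: x rule: dec_induct)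
  case base then show ?case using tr_id[OF vc] by simp
next
  case (step n)
  have "trunc i (x(Suc n := 0)) \<in> Pk q i" using step.IH P3_mem[OF vc step.prems] by blast
  then show ?case using tr_Suc[OF step.hyps(1)] by simp
qed

lemma tr_le: assumes vc: "valid_choice q" and "i \<le> m" and a: "a \<in> Pk q m" and b: "b \<in> Pk q m"
  shows "rho q i (trunc i a) (trunc i b) \<le> rho q m a b"
  using assms(2) a b
proof (induction m arbitrary: a b rule: dec_induct)
  case base then show ?case using tr_id[OF vc] by simp
next
  case (step n)
  have "rho q i (trunc i (a(Suc n := 0))) (trunc i (b(Suc n := 0))) \<le> rho q n (a(Suc n := 0)) (b(Suc n := 0))"
    using step.IH P3_mem[OF vc step.prems(1)] P3_mem[OF vc step.prems(2)] by blast
  also have "\<dots> \<le> rho q (Suc n) a b" by (rule rho_ge_base)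
  finally show ?case using tr_Suc[OF step.hyps(1)] by simp
qed

lemma tr_coord: "j \<le> i \<Longrightarrow> trunc i x j = x j" by (simp add: trunc_def)

lemma coord_lip: assumes vc: "valid_choice q" and a: "a \<in> Pk q m" and b: "b \<in> Pk q m"
  shows "\<bar>a j - b j\<bar> \<le> 2 * rho q m a b"
proof (cases "j \<le> m")
  case True
  have "\<bar>trunc j a j - trunc j b j\<bar> \<le> 2 * rho q j (trunc j a) (trunc j b)"
    using R3[OF vc tr_mem[OF vc True a] tr_mem[OF vc True b]] .
  also have "\<dots> \<le> 2 * rho q m a b" using tr_le[OF vc True a b] by simp
  finally show ?thesis by (simp add: tr_coord)
next
  case False
  then show ?thesis using P1[OF vc a, of j] P1[OF vc b, of j] rho_nonneg[of q m a b] by simp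
qed

lemma tree: assumes vc: "valid_choice q" and "i \<le> m" and a: "a \<in> Pk q m" and b: "b \<in> Pk q m"
  and ne: "trunc i a \<noteq> trunc i b"
  shows "rho q m a (trunc i a) + rho q m (trunc i b) b \<le> rho q m a b"
  using assms(2) a b ne
proof (induction m arbitrary: a b rule: dec_induct)
  case base then show ?case using tr_id[OF vc] by (simp add: rho_refl rho_nonneg)
next
  case (step n)
  define a' where "a' = a(Suc n := 0)"
  define b' where "b' = b(Suc n := 0)"
  have ta: "trunc i a' = trunc i a" "trunc i b' = trunc i b" using tr_Suc[OF step.hyps(1)] a'_def b'_def by auto
  have ne': "a' \<noteq> b'" using ta step.prems(3) by auto
  have am: "a' \<in> Pk q n" "b' \<in> Pk q n" using P3_mem[OF vc step.prems(1)] P3_mem[OF vc step.prems(2)]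
    unfolding a'_def b'_def by auto
  have "trunc i a' \<noteq> trunc i b'" using ta step.prems(3) by simp
  then have "rho q n a' (trunc i a') + rho q n (trunc i b') b' \<le> rho q n a' b'" by (rule step.IH[OF am])
  then have IH: "rho q n a' (trunc i a) + rho q n (trunc i b) b' \<le> rho q n a' b'" unfolding ta .
  have z: "trunc i a (Suc n) = 0" "trunc i b (Suc n) = 0" using step.hyps(1) by (auto simp: trunc_def)
  have e1: "rho q (Suc n) a b = HH q n a + rho q n a' b' + HH q n b"
    using rho_split[of a n b q] ne' unfolding a'_def b'_def by simp
  have e2: "rho q (Suc n) a (trunc i a) = HH q n a + rho q n a' (trunc i a)"
    using rho_to_base[of "trunc i a" n q a, OF z(1)] unfolding a'_def by simp
  have e3: "rho q (Suc n) (trunc i b) b = HH q n b + rho q n (trunc i b) b'"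
    using rho_to_base[of "trunc i b" n q b, OF z(2)] unfolding b'_def by (simp add: rho_sym)
  show ?case using e1 e2 e3 IH by simp
qed

lemma lemmaA: assumes vc: "valid_choice q" and x: "x \<in> Pk q m" and nx: "x \<notin> Pk q j"
  shows "x j \<in> (\<lambda>x. x j) ` range (q j)"
  using x nx
proof (induction m arbitrary: x)
  case 0 then show ?case using Pk_mono[OF vc, of 0 j] by auto
next
  case (Suc m)
  from P3[OF vc Suc.prems(1)] consider "x \<in> Pk q m" | n where "x(Suc m := 0) = q m n" by blast
  then show ?case
  proof cases
    case 1 then show ?thesis using Suc by blast
  next
    case 2
    have xj: "x j = q m n j" if "j \<noteq> Suc m" using 2 that by (metis fun_upd_other)
    consider "m = j" | "m < j" | "j < m" by linarith
    then show ?thesis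
    proof cases
      case 1 then show ?thesis using xj by auto
    next
      case 2
      then have sj: "Suc m \<le> j" by simp
      show ?thesis using Pk_mono[OF vc sj] Suc.prems by blast
    next
      case 3
      have "q m n \<notin> Pk q j" using P1[OF vc _ 3, of "q m n"] vc_nz[OF vc, of m n] by auto
      then have "q m n j \<in> (\<lambda>x. x j) ` range (q j)" using Suc.IH vc_range[OF vc] by blast
      then show ?thesis using xj 3 by simp
    qed
  qed
qed




declare rho.simps(2)[simp del]


lemma rho_same_base: assumes vc: "valid_choice q" and "a(Suc m := 0) = q m n" "b(Suc m := 0) = q m n"
  shows "rho q (Suc m) a b = dd m n (a (Suc m)) (b (Suc m))"
  unfolding rho.simps Let_def assms(2,3) by (simp add: idx_q[OF vc])

lemma lim_by_bound: fixes X :: "nat \<Rightarrow> 'a::metric_space"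
  assumes "eventually (\<lambda>k. dist (X k) l \<le> g k) sequentially" "g \<longlonglongrightarrow> 0"
  shows "X \<longlonglongrightarrow> l"
proof -
  have "(\<lambda>k. dist (X k) l) \<longlonglongrightarrow> 0"
    by (rule tendsto_sandwich[OF _ assms(1) tendsto_const assms(2)]) simp
  then show ?thesis by (rule tendsto_dist_iff[THEN iffD2])
qed

lemma Cauchy_real_bound: fixes X :: "nat \<Rightarrow> 'a::metric_space" and s :: "nat \<Rightarrow> real"
  assumes "Cauchy X" "\<And>k l. \<bar>s k - s l\<bar> \<le> 2 * dist (X k) (X l)"
  shows "convergent s"
proof -
  have "Cauchy s"
    unfolding Cauchy_def
  proof (intro allI impI)
    fix e :: real assume e: "e > 0"
    obtain N where N: "\<forall>m\<ge>N. \<forall>n\<ge>N. dist (X m) (X n) < e/2" using assms(1) e unfolding Cauchy_def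
      by (meson half_gt_zero)
    show "\<exists>M. \<forall>m\<ge>M. \<forall>n\<ge>M. dist (s m) (s n) < e"
    proof (intro exI allI impI)
      fix m n assume "N \<le> m" "N \<le> n"
      then have "dist (X m) (X n) < e/2" using N by blast
      then show "dist (s m) (s n) < e" using assms(2)[of m n] by (simp add: dist_real_def)
    qed
  qed
  then show ?thesis by (simp add: Cauchy_convergent_iff)
qed

locale cfg =
  fixes q :: "nat \<Rightarrow> nat \<Rightarrow> (nat \<Rightarrow> real)" and M :: "'m::metric_space set" and iota :: "(nat \<Rightarrow> real) \<Rightarrow> 'm"
  assumes vc: "valid_choice q"
    and iso: "\<forall>x\<in>Pinf q. \<forall>y\<in>Pinf q. dist (iota x) (iota y) = rhoinf q x y"
    and sub: "iota ` Pinf q \<subseteq> M"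
    and cl: "M \<subseteq> closure (iota ` Pinf q)"
    and comp: "complete M"
begin

lemma Pk_Pinf: "x \<in> Pk q i \<Longrightarrow> x \<in> Pinf q" by (auto simp: Pinf_def)

lemma common: assumes "x \<in> Pinf q" "y \<in> Pinf q" obtains m where "j \<le> m" "x \<in> Pk q m" "y \<in> Pk q m"
proof -
  obtain i1 i2 where "x \<in> Pk q i1" "y \<in> Pk q i2" using assms by (auto simp: Pinf_def)
  moreover have "i1 \<le> max j (max i1 i2)" "i2 \<le> max j (max i1 i2)" by auto
  ultimately have "x \<in> Pk q (max j (max i1 i2))" "y \<in> Pk q (max j (max i1 i2))"
    using Pk_mono[OF vc] by blast+
  then show ?thesis using that[of "max j (max i1 i2)"] by simp
qed

lemma dist_eq: "x \<in> Pk q m \<Longrightarrow> y \<in> Pk q m \<Longrightarrow> dist (iota x) (iota y) = rho q m x y"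
  using iso Pk_Pinf rhoinf_eq[OF vc] by metis

lemma coord_dist: assumes "x \<in> Pinf q" "y \<in> Pinf q" shows "\<bar>x j - y j\<bar> \<le> 2 * dist (iota x) (iota y)"
proof -
  obtain m where "x \<in> Pk q m" "y \<in> Pk q m" using common[OF assms] by blast
  then show ?thesis using coord_lip[OF vc] dist_eq by metis
qed

lemma Compl: "(\<forall>k. a k \<in> Pk q j) \<Longrightarrow> (\<lambda>k. iota (a k)) \<longlonglongrightarrow> z \<Longrightarrow> z \<in> iota ` Pk q j"
proof (induction j arbitrary: a z)
  case 0
  have Ca: "Cauchy (\<lambda>k. iota (a k))" by (rule LIMSEQ_imp_Cauchy[OF 0(2)])
  have "convergent (\<lambda>k. a k 0)"
    by (rule Cauchy_real_bound[OF Ca]) (use coord_dist[where j=0] 0(1) Pk_Pinf in blast)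
  then obtain s where s: "(\<lambda>k. a k 0) \<longlonglongrightarrow> s" by (auto simp: convergent_def)
  have ab: "0 \<le> a k 0" "a k 0 \<le> 1" for k using 0(1) by auto
  have s01: "0 \<le> s" "s \<le> 1" using s ab by (auto intro: LIMSEQ_le_const LIMSEQ_le_const2)
  define p where "p = (\<lambda>i::nat. if i = 0 then s else 0)"
  have p: "p \<in> Pk q 0" using s01 by (simp add: p_def)
  have "(\<lambda>k. iota (a k)) \<longlonglongrightarrow> iota p"
  proof (rule lim_by_bound)
    show "eventually (\<lambda>k. dist (iota (a k)) (iota p) \<le> 2 * \<bar>a k 0 - s\<bar>) sequentially"
    proof (intro always_eventually allI)
      fix k
      have "dist (iota (a k)) (iota p) = theta_r 1 (a k 0) s" using dist_eq[OF 0(1)[rule_format, of k] p] by (simp add: p_def)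
      also have "\<dots> \<le> 2 * \<bar>a k 0 - s\<bar>" using ab s01 by (intro theta_r_upper) auto
      finally show "dist (iota (a k)) (iota p) \<le> 2 * \<bar>a k 0 - s\<bar>" .
    qed
    have "(\<lambda>k. a k 0 - s) \<longlonglongrightarrow> 0" using s by (simp add: LIM_zero)
    then have "(\<lambda>k. \<bar>a k 0 - s\<bar>) \<longlonglongrightarrow> 0" by (rule tendsto_rabs_zero)
    then show "(\<lambda>k. 2 * \<bar>a k 0 - s\<bar>) \<longlonglongrightarrow> 0" by (rule tendsto_mult_right_zero)
  qed
  then have "z = iota p" using 0(2) LIMSEQ_unique by blast
  then show ?case using p by blast
next
  case (Suc i)
  note am = Suc.prems(1)[rule_format]
  define b where "b k = (a k)(Suc i := 0)" for k
  have bm: "b k \<in> Pk q i" for k using P3_mem[OF vc am] b_def by simp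
  have bm': "b k \<in> Pk q (Suc i)" for k using bm P2[OF vc] by blast
  have Ca: "Cauchy (\<lambda>k. iota (a k))" by (rule LIMSEQ_imp_Cauchy[OF Suc.prems(2)])
  have dab: "dist (iota (b k)) (iota (b l)) \<le> dist (iota (a k)) (iota (a l))" for k l
    using dist_eq[OF bm bm] dist_eq[OF am am] rho_ge_base[of q i "a k" "a l"] b_def by simp
  have Cb: "Cauchy (\<lambda>k. iota (b k))"
    unfolding Cauchy_def
  proof (intro allI impI)
    fix e :: real assume "e > 0"
    then obtain N where "\<forall>m\<ge>N. \<forall>n\<ge>N. dist (iota (a m)) (iota (a n)) < e" using Ca unfolding Cauchy_def by blast
    then show "\<exists>N. \<forall>m\<ge>N. \<forall>n\<ge>N. dist (iota (b m)) (iota (b n)) < e" using dab by (meson le_less_trans)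
  qed
  have bM: "\<forall>k. iota (b k) \<in> M" using sub Pk_Pinf[OF bm] by blast
  obtain w where "w \<in> M" and w: "(\<lambda>k. iota (b k)) \<longlonglongrightarrow> w"
    using comp[unfolded complete_def, rule_format, of "\<lambda>k. iota (b k)"] bM Cb by blast
  obtain p where p: "p \<in> Pk q i" and wp: "w = iota p" using Suc.IH[of b w] bm w by auto
  define y where "y k = a k (Suc i)" for k
  have y0: "0 \<le> y k" for k using HH_bnd(1)[OF vc am] y_def by simp
  have yH: "y k \<le> 2 * HH q i (a k)" "HH q i (a k) \<le> 2 * y k" for k using HH_bnd(2,3)[OF vc am] y_def by auto
  have ycoord: "\<bar>y k - y l\<bar> \<le> 2 * dist (iota (a k)) (iota (a l))" for k l
    using R3[OF vc am am, of k l] dist_eq[OF am am] y_def by simp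
  have "convergent y" by (rule Cauchy_real_bound[OF Ca ycoord])
  then obtain yl where yl: "y \<longlonglongrightarrow> yl" by (auto simp: convergent_def)
  have yl0: "0 \<le> yl" using yl y0 by (auto intro: LIMSEQ_le_const)
  show ?case
  proof (cases "yl = 0")
    case True
    have "(\<lambda>k. iota (a k)) \<longlonglongrightarrow> iota p"
    proof (rule lim_by_bound)
      show "eventually (\<lambda>k. dist (iota (a k)) (iota p) \<le> 2 * y k + dist (iota (b k)) (iota p)) sequentially"
      proof (intro always_eventually allI)
        fix k
        have z: "b k (Suc i) = 0" by (simp add: b_def)
        have "dist (iota (a k)) (iota (b k)) = rho q (Suc i) (a k) (b k)" using dist_eq[OF am bm'] .
        also have "\<dots> = HH q i (a k) + rho q i (b k) (b k)" using rho_to_base[of "b k" i q "a k", OF z] by (simp only: b_def[symmetric])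
        also have "\<dots> = HH q i (a k)" by (simp add: rho_refl)
        finally have "dist (iota (a k)) (iota (b k)) \<le> 2 * y k" using yH by simp
        then show "dist (iota (a k)) (iota p) \<le> 2 * y k + dist (iota (b k)) (iota p)"
          using dist_triangle[of "iota (a k)" "iota p" "iota (b k)"] by simp
      qed
      have "(\<lambda>k. iota (b k)) \<longlonglongrightarrow> iota p" using w wp by simp
      then have "(\<lambda>k. dist (iota (b k)) (iota p)) \<longlonglongrightarrow> 0" by (rule tendsto_dist_iff[THEN iffD1])
      moreover have "(\<lambda>k. 2 * y k) \<longlonglongrightarrow> 0"
      proof -
        have "y \<longlonglongrightarrow> 0" using yl True by simp
        then show ?thesis by (rule tendsto_mult_right_zero)
      qed
      ultimately show "(\<lambda>k. 2 * y k + dist (iota (b k)) (iota p)) \<longlonglongrightarrow> 0"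
        by (intro tendsto_add_zero)
    qed
    then have "z = iota p" using Suc.prems(2) LIMSEQ_unique by blast
    then show ?thesis using p P2[OF vc] by blast
  next
    case False
    then have ylp: "yl > 0" using yl0 by simp
    obtain N1 where N1: "\<forall>k\<ge>N1. y k > yl / 2"
    proof -
      have "eventually (\<lambda>k. y k > yl / 2) sequentially"
        using yl ylp by (intro order_tendstoD(1)) auto
      then show ?thesis using that by (auto simp: eventually_sequentially)
    qed
    obtain N2 where N2: "\<forall>k\<ge>N2. \<forall>l\<ge>N2. dist (iota (a k)) (iota (a l)) < yl / 2"
      using Ca ylp unfolding Cauchy_def by (meson half_gt_zero)
    define N where "N = max N1 N2"
    have same: "b k = b N" if "k \<ge> N" for k
    proof (rule ccontr)
      assume ne: "b k \<noteq> b N"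
      have "rho q (Suc i) (a k) (a N) = HH q i (a k) + rho q i (b k) (b N) + HH q i (a N)"
        using rho_split[of "a k" i "a N" q] ne by (simp add: b_def)
      moreover have "y k > yl / 2" "y N > yl / 2" using N1 that N_def by auto
      moreover have "dist (iota (a k)) (iota (a N)) < yl / 2" using N2 that N_def by auto
      ultimately show False using yH[of k] yH[of N] rho_nonneg[of q i "b k" "b N"] dist_eq[OF am am, of k N] by linarith
    qed
    have "yl / 2 < y N" using N1 N_def by simp
    then have yNp: "y N > 0" by (meson half_gt_zero less_trans ylp)
    from P3[OF vc am[of N]] yNp obtain n where n: "b N = q i n" by (auto simp: b_def y_def)
    have yk: "k \<ge> N \<Longrightarrow> y k \<le> rr i n" for k
    proof -
      assume k: "k \<ge> N"
      have "yl / 2 < y k" using N1 N_def k by simp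
      then have ykp: "y k > 0" by (meson half_gt_zero less_trans ylp)
      from P3[OF vc am[of k]] ykp obtain n' where "b k = q i n'" "y k \<le> rr i n'" by (auto simp: b_def y_def)
      moreover have "n' = n" using calculation(1) same[OF k] n vc_inj[OF vc, of i] by (auto dest: injD)
      ultimately show ?thesis by simp
    qed
    have ylr: "yl \<le> rr i n"
      by (rule LIMSEQ_le_const2[OF yl]) (use yk in blast)
    define p' where "p' = (q i n)(Suc i := yl)"
    have p': "p' \<in> Pk q (Suc i)" using yl0 ylr p'_def by auto
    have bp: "p'(Suc i := 0) = q i n" using q_Suc0[OF vc] p'_def by simp
    have "(\<lambda>k. iota (a k)) \<longlonglongrightarrow> iota p'"
    proof (rule lim_by_bound)
      show "eventually (\<lambda>k. dist (iota (a k)) (iota p') \<le> 2 * \<bar>y k - yl\<bar>) sequentially"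
        unfolding eventually_sequentially
      proof (intro exI allI impI)
        fix k assume k: "N \<le> k"
        have "dist (iota (a k)) (iota p') = rho q (Suc i) (a k) p'" using dist_eq[OF am p'] .
        also have "\<dots> = dd i n (y k) yl" 
          using rho_same_base[OF vc, of "a k" i n p'] same[OF k] n bp by (simp add: b_def y_def p'_def)
        also have "\<dots> \<le> 2 * \<bar>y k - yl\<bar>" using y0 yk[OF k] yl0 ylr by (intro dd_upper) auto
        finally show "dist (iota (a k)) (iota p') \<le> 2 * \<bar>y k - yl\<bar>" .
      qed
      have "(\<lambda>k. y k - yl) \<longlonglongrightarrow> 0" using yl by (simp add: LIM_zero)
      then have "(\<lambda>k. \<bar>y k - yl\<bar>) \<longlonglongrightarrow> 0" by (rule tendsto_rabs_zero)
      then show "(\<lambda>k. 2 * \<bar>y k - yl\<bar>) \<longlonglongrightarrow> 0" by (rule tendsto_mult_right_zero)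
    qed
    then have "z = iota p'" using Suc.prems(2) LIMSEQ_unique by blast
    then show ?thesis using p' by blast
  qed
qed

lemma not_closure: assumes "z \<in> M" "z \<notin> iota ` Pk q j" shows "z \<notin> closure (iota ` Pk q j)"
proof
  assume "z \<in> closure (iota ` Pk q j)"
  then obtain f where f: "\<forall>n. f n \<in> iota ` Pk q j" "f \<longlonglongrightarrow> z" by (auto simp: closure_sequential)
  have "\<forall>n. \<exists>x. x \<in> Pk q j \<and> f n = iota x" using f(1) by blast
  then obtain a where a: "\<forall>n. a n \<in> Pk q j \<and> f n = iota (a n)" by metis
  have fa: "f = (\<lambda>n. iota (a n))" using a by (simp add: fun_eq_iff)
  have "(\<lambda>n. iota (a n)) \<longlonglongrightarrow> z" using f(2) unfolding fa .
  then have "z \<in> iota ` Pk q j" using Compl a by blast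
  then show False using assms by blast
qed

lemma near: assumes d: "\<delta> > 0" and far: "\<forall>p\<in>Pk q j. \<delta> \<le> dist (iota p) z"
  and x: "x \<in> Pinf q" and x': "x' \<in> Pinf q" and dx: "dist (iota x) z < \<delta>/4" and dx': "dist (iota x') z < \<delta>/4"
  shows "x j = x' j"
proof -
  obtain m where m: "j \<le> m" "x \<in> Pk q m" "x' \<in> Pk q m" using common[OF x x'] by blast
  show ?thesis
  proof (cases "trunc j x = trunc j x'")
    case True then show ?thesis using tr_coord[of j j x] tr_coord[of j j x'] by simp
  next
    case False
    have t: "trunc j x \<in> Pk q j" "trunc j x' \<in> Pk q j" using tr_mem[OF vc m(1)] m by auto
    have t': "trunc j x \<in> Pk q m" "trunc j x' \<in> Pk q m" using t Pk_mono[OF vc m(1)] by auto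
    have tr: "rho q m x (trunc j x) + rho q m (trunc j x') x' \<le> rho q m x x'"
      by (rule tree[OF vc m False])
    have e1: "dist (iota x) (iota (trunc j x)) = rho q m x (trunc j x)" using dist_eq m t' by blast
    have e2: "dist (iota (trunc j x')) (iota x') = rho q m (trunc j x') x'" using dist_eq m t' by blast
    have e3: "dist (iota x) (iota x') = rho q m x x'" using dist_eq m by blast
    have f1: "\<delta> \<le> dist (iota (trunc j x)) z" "\<delta> \<le> dist (iota (trunc j x')) z" using far t by auto
    have "dist (iota (trunc j x)) z \<le> dist (iota (trunc j x)) (iota x) + dist (iota x) z" by (rule dist_triangle)
    moreover have "dist (iota (trunc j x')) z \<le> dist (iota (trunc j x')) (iota x') + dist (iota x') z" by (rule dist_triangle)
    moreover have "dist (iota x) (iota x') \<le> dist (iota x) z + dist z (iota x')" by (rule dist_triangle)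
    ultimately have False using tr e1 e2 e3 f1 dx dx' d dist_commute[of "iota x" "iota (trunc j x)"] dist_commute[of z "iota x'"]
      by linarith
    then show ?thesis ..
  qed
qed

end

theorem lemma4p8:
  fixes q :: "nat \<Rightarrow> nat \<Rightarrow> (nat \<Rightarrow> real)"
    and M :: "'m::metric_space set"
    and iota :: "(nat \<Rightarrow> real) \<Rightarrow> 'm"
    and j :: nat
  assumes "valid_choice q"
    and "\<forall>x\<in>Pinf q. \<forall>y\<in>Pinf q. dist (iota x) (iota y) = rhoinf q x y"
    and "iota ` Pinf q \<subseteq> M"
    and "M \<subseteq> closure (iota ` Pinf q)"
    and "complete M"
  shows "(\<forall>x\<in>Pinf q. \<forall>e>0. \<exists>\<delta>>0. \<forall>y\<in>Pinf q. rhoinf q x y < \<delta> \<longrightarrow> \<bar>y j - x j\<bar> < e)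
       \<and> (\<exists>f :: 'm \<Rightarrow> real. continuous_on M f
            \<and> (\<forall>x\<in>Pinf q. f (iota x) = x j)
            \<and> (\<forall>z \<in> M - iota ` Pk q j. f z \<in> (\<lambda>x. x j) ` range (q j)))"
proof -
  interpret cfg q M iota using assms by unfold_locales
  have part1: "\<forall>x\<in>Pinf q. \<forall>e>0. \<exists>\<delta>>0. \<forall>y\<in>Pinf q. rhoinf q x y < \<delta> \<longrightarrow> \<bar>y j - x j\<bar> < e"
  proof (intro ballI allI impI)
    fix x e assume x: "x \<in> Pinf q" and e: "(e::real) > 0"
    show "\<exists>\<delta>>0. \<forall>y\<in>Pinf q. rhoinf q x y < \<delta> \<longrightarrow> \<bar>y j - x j\<bar> < e"
    proof (intro exI[of _ "e/2"] conjI ballI impI)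
      show "e/2 > 0" using e by simp
      fix y assume y: "y \<in> Pinf q" and r: "rhoinf q x y < e/2"
      have "\<bar>x j - y j\<bar> \<le> 2 * dist (iota x) (iota y)" by (rule coord_dist[OF x y])
      moreover have "dist (iota x) (iota y) = rhoinf q x y" using iso x y by blast
      ultimately show "\<bar>y j - x j\<bar> < e" using r by (simp add: abs_minus_commute)
    qed
  qed
  define X where "X = iota ` Pinf q"
  define f0 where "f0 w = (SOME x. x \<in> Pinf q \<and> iota x = w) j" for w
  have f0x: "f0 (iota x) = x j" if x: "x \<in> Pinf q" for x
  proof -
    have "\<exists>x'. x' \<in> Pinf q \<and> iota x' = iota x" using x by blast
    then have s: "(SOME x'. x' \<in> Pinf q \<and> iota x' = iota x) \<in> Pinf q \<and> iota (SOME x'. x' \<in> Pinf q \<and> iota x' = iota x) = iota x"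
      by (rule someI_ex)
    then have "\<bar>(SOME x'. x' \<in> Pinf q \<and> iota x' = iota x) j - x j\<bar> \<le> 2 * dist (iota (SOME x'. x' \<in> Pinf q \<and> iota x' = iota x)) (iota x)"
      using coord_dist x by blast
    then show ?thesis using s by (simp add: f0_def)
  qed
  have uc: "uniformly_continuous_on X f0"
    unfolding uniformly_continuous_on_def
  proof (intro allI impI)
    fix e :: real assume e: "e > 0"
    show "\<exists>d>0. \<forall>x\<in>X. \<forall>x'\<in>X. dist x' x < d \<longrightarrow> dist (f0 x') (f0 x) < e"
    proof (intro exI[of _ "e/2"] conjI ballI impI)
      show "e/2 > 0" using e by simp
      fix w w' assume w: "w \<in> X" and w': "w' \<in> X" and d: "dist w' w < e/2"
      obtain u u' where u: "u \<in> Pinf q" "w = iota u" and u': "u' \<in> Pinf q" "w' = iota u'" using w w' X_def by auto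
      have "\<bar>u' j - u j\<bar> \<le> 2 * dist (iota u') (iota u)" by (rule coord_dist[OF u'(1) u(1)])
      then show "dist (f0 w') (f0 w) < e" using d u u' f0x by (simp add: dist_real_def)
    qed
  qed
  obtain g where gc: "uniformly_continuous_on (closure X) g" and gX: "\<And>x. x \<in> X \<Longrightarrow> f0 x = g x"
    using uniformly_continuous_on_extension_on_closure[OF uc] by metis
  have gcont: "continuous_on (closure X) g" using gc by (rule uniformly_continuous_imp_continuous)
  have gM: "continuous_on M g" using continuous_on_subset[OF gcont] cl X_def by blast
  have gx: "g (iota x) = x j" if "x \<in> Pinf q" for x using gX[of "iota x"] f0x[OF that] that X_def by auto
  have part3: "\<forall>z \<in> M - iota ` Pk q j. g z \<in> (\<lambda>x. x j) ` range (q j)"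
  proof
    fix z assume z: "z \<in> M - iota ` Pk q j"
    have "z \<notin> closure (iota ` Pk q j)" using not_closure z by blast
    then obtain \<delta> where d: "\<delta> > 0" and far': "\<forall>y\<in>iota ` Pk q j. \<not> dist y z < \<delta>"
      unfolding closure_approachable by blast
    have far: "\<forall>p\<in>Pk q j. \<delta> \<le> dist (iota p) z" using far' by (auto simp: not_less)
    have "z \<in> closure X" using z cl X_def by blast
    then obtain F where F: "\<forall>n. F n \<in> X" "F \<longlonglongrightarrow> z" by (auto simp: closure_sequential)
    have "\<forall>n. \<exists>x. x \<in> Pinf q \<and> F n = iota x" using F(1) X_def by blast
    then obtain u where u: "\<forall>n. u n \<in> Pinf q \<and> F n = iota (u n)" by metis
    have "eventually (\<lambda>n. dist (F n) z < \<delta>/4) sequentially" using F(2) d by (intro tendstoD) auto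
    then obtain N where N: "\<forall>n\<ge>N. dist (iota (u n)) z < \<delta>/4" using u by (auto simp: eventually_sequentially)
    define c where "c = u N j"
    have uc': "u n j = c" if "n \<ge> N" for n
      using near[OF d far] u N that c_def by (metis order_refl)
    have lim1: "(\<lambda>n. g (F n)) \<longlonglongrightarrow> g z"
      using gcont F \<open>z \<in> closure X\<close> closure_subset unfolding continuous_on_sequentially comp_def by blast
    have "eventually (\<lambda>n. g (F n) = c) sequentially"
      unfolding eventually_sequentially using u gx uc' by (intro exI[of _ N]) auto
    then have "(\<lambda>n. g (F n)) \<longlonglongrightarrow> c" by (rule tendsto_eventually)
    then have gz: "g z = c" using lim1 LIMSEQ_unique by blast
    have "u N \<notin> Pk q j"
    proof
      assume "u N \<in> Pk q j"
      then have "\<delta> \<le> dist (iota (u N)) z" using far by blast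
      moreover have "dist (iota (u N)) z < \<delta>/4" using N by blast
      ultimately show False using d by simp
    qed
    moreover obtain m where "u N \<in> Pk q m" using u by (auto simp: Pinf_def)
    ultimately have "c \<in> (\<lambda>x. x j) ` range (q j)" using lemmaA[OF vc] c_def by blast
    then show "g z \<in> (\<lambda>x. x j) ` range (q j)" using gz by simp
  qed
  show ?thesis using part1 gM gx part3 by blast
qed



end
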